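(* Let $b\ge 2$ be even and $n\ge 2$, and put $c_i=b^{n+i}+1$. Then $$\mathrm{Ap}(SC^{+}(b,n),c_0)=\Big\{\sum_{i=1}^{n} t_i c_i : (t_1,\dots,t_n)\in RC_b(n)\Big\}.$$
   Context: For an even integer $b\ge2$ and $n\ge0$, $SC^{+}(b,n)=\langle\{b^{n+i}+1: i\in\mathbb{N}\}\rangle$ (submonoid of $(\mathbb{N},+)$ generated by these numbers). $\mathrm{Ap}(S,x)=\{s\in S:s-x\notin S\}$. $RC_b(n)$ is the set of $(t_1,\dots,t_n)\in\{0,1,\dots,b\}^n$ such that: (i) if $t_i=b$ then $t_j=0$ for all $1\le j<i$; (ii) $t_n\le b-1$; (iii) if $t_n=b-1$ then $t_1\le 1$ and $t_i=0$ for all $i\notin\{1,n\}$. *)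

theory Defs
  imports Main
begin

inductive_set monoid_gen :: "nat set \<Rightarrow> nat set" for A :: "nat set" where
  zero: "0 \<in> monoid_gen A"
| add: "a \<in> A \<Longrightarrow> s \<in> monoid_gen A \<Longrightarrow> a + s \<in> monoid_gen A"

definition SCplus :: "nat \<Rightarrow> nat \<Rightarrow> nat set" where
  "SCplus b n = monoid_gen {b ^ (n + i) + 1 | i. True}"

text \<open>Apery set; since x is a natural number, s - x \<notin> S includes the case s < x
  (s - x is then negative, hence not in S).\<close>
definition Apery :: "nat set \<Rightarrow> nat \<Rightarrow> nat set" where
  "Apery S x = {s \<in> S. \<not> (x \<le> s \<and> s - x \<in> S)}"

text \<open>RC_b(n): tuples (t_1..t_n) represented as functions nat \<Rightarrow> nat that vanish
  outside {1..n}.\<close>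
definition RC :: "nat \<Rightarrow> nat \<Rightarrow> (nat \<Rightarrow> nat) set" where
  "RC b n = {t. (\<forall>i. i \<notin> {1..n} \<longrightarrow> t i = 0) \<and> (\<forall>i\<in>{1..n}. t i \<le> b)
     \<and> (\<forall>i\<in>{1..n}. t i = b \<longrightarrow> (\<forall>j. 1 \<le> j \<and> j < i \<longrightarrow> t j = 0))
     \<and> t n \<le> b - 1
     \<and> (t n = b - 1 \<longrightarrow> t 1 \<le> 1 \<and> (\<forall>i\<in>{1..n}. i \<noteq> 1 \<and> i \<noteq> n \<longrightarrow> t i = 0))}"

end

theory Submission
  imports Defs "HOL-Library.Multiset"
begin

lemma odd_dvd2: assumes "(g::nat) dvd 2" "odd g" shows "g = 1"
proof -
  have "g \<le> 2" using dvd_imp_le[OF assms(1)] by simp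
  moreover have "g \<noteq> 0"
  proof
    assume "g = 0" then show False using assms(1) by simp
  qed
  moreover have "g \<noteq> 2"
  proof
    assume "g = 2" then show False using assms(2) by simp
  qed
  ultimately show ?thesis by linarith
qed

primrec Rp :: "nat \<Rightarrow> nat \<Rightarrow> nat" where
  "Rp b 0 = 0"
| "Rp b (Suc j) = b * Rp b j + 1"

lemma Rp_pow: "b \<ge> 1 \<Longrightarrow> (b - 1) * Rp b j + 1 = b ^ j"
proof (induction j)
  case 0 then show ?case by simp
next
  case (Suc j)
  obtain c where c: "b = Suc c" using Suc.prems by (cases b) auto
  have "(b - 1) * Rp b (Suc j) + 1 = b * ((b - 1) * Rp b j + 1)"
    unfolding c by (simp add: algebra_simps)
  also have "\<dots> = b ^ Suc j" using Suc by simp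
  finally show ?case .
qed

lemma Rp_pos: "j \<ge> 1 \<Longrightarrow> Rp b j \<ge> 1"
  by (cases j) auto

lemma Rp_mono_strict: "b \<ge> 1 \<Longrightarrow> i < j \<Longrightarrow> Rp b i < Rp b j"
proof (induction j)
  case 0 then show ?case by simp
next
  case (Suc j)
  have "Rp b j \<le> b * Rp b j" using Suc.prems by simp
  then have "Rp b j < b * Rp b j + 1" by linarith
  then have "Rp b j < Rp b (Suc j)" by simp
  then show ?case using Suc by (cases "i = j") auto
qed

lemma Rp_mono: "b \<ge> 1 \<Longrightarrow> i \<le> j \<Longrightarrow> Rp b i \<le> Rp b j"
  using Rp_mono_strict[of b i j] by (cases "i = j") auto

lemma Rp_ge2: "b \<ge> 1 \<Longrightarrow> i \<ge> 2 \<Longrightarrow> Rp b i \<ge> b + 1"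
proof -
  assume b: "b \<ge> 1" and i: "i \<ge> 2"
  have "Rp b 2 = b + 1" by (simp add: numeral_2_eq_2)
  moreover have "Rp b 2 \<le> Rp b i" using Rp_mono_strict[OF b, of 2 i] i by (cases "i = 2") auto
  ultimately show ?thesis by simp
qed

definition normal :: "nat \<Rightarrow> nat \<Rightarrow> (nat \<Rightarrow> nat) \<Rightarrow> bool" where
  "normal b K t = (\<forall>i\<in>{1..K}. t i \<le> b \<and> (t i = b \<longrightarrow> (\<forall>j. 1 \<le> j \<and> j < i \<longrightarrow> t j = 0)))"

definition vl :: "nat \<Rightarrow> nat \<Rightarrow> (nat \<Rightarrow> nat) \<Rightarrow> nat" where
  "vl b K t = (\<Sum>i=1..K. t i * Rp b i)"

definition ct :: "nat \<Rightarrow> (nat \<Rightarrow> nat) \<Rightarrow> nat" where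
  "ct K t = (\<Sum>i=1..K. t i)"

lemma vl_Suc: "vl b (Suc K) t = vl b K t + t (Suc K) * Rp b (Suc K)"
  unfolding vl_def by (simp add: sum.cl_ivl_Suc)

lemma ct_Suc: "ct (Suc K) t = ct K t + t (Suc K)"
  unfolding ct_def by (simp add: sum.cl_ivl_Suc)

lemma normal_Suc: "normal b (Suc K) t \<Longrightarrow> normal b K t"
  unfolding normal_def by auto

lemma vl_zero: "(\<forall>j. 1 \<le> j \<and> j \<le> K \<longrightarrow> t j = 0) \<Longrightarrow> vl b K t = 0"
  unfolding vl_def by (intro sum.neutral) auto

lemma normal_bound: "b \<ge> 1 \<Longrightarrow> normal b K t \<Longrightarrow> vl b K t < Rp b (Suc K)"
proof (induction K)
  case 0 then show ?case by (simp add: vl_def)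
next
  case (Suc K)
  have nK: "normal b K t" using normal_Suc[OF Suc.prems(2)] .
  have tle: "t (Suc K) \<le> b" and tb: "t (Suc K) = b \<Longrightarrow> (\<forall>j. 1 \<le> j \<and> j < Suc K \<longrightarrow> t j = 0)"
    using Suc.prems unfolding normal_def by auto
  show ?case
  proof (cases "t (Suc K) = b")
    case True
    then have "vl b K t = 0" using tb by (intro vl_zero) auto
    then show ?thesis using True by (simp add: vl_Suc)
  next
    case False
    then have "t (Suc K) \<le> b - 1" using tle by simp
    then have "t (Suc K) * Rp b (Suc K) \<le> (b - 1) * Rp b (Suc K)" by (rule mult_right_mono) simp
    moreover have "vl b K t < Rp b (Suc K)" using Suc.IH[OF Suc.prems(1) nK] .
    moreover have "(b - 1) * Rp b (Suc K) + Rp b (Suc K) \<le> b * Rp b (Suc K)"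
      using Suc.prems(1) by (cases b) (auto simp: algebra_simps)
    moreover have "Rp b (Suc (Suc K)) = b * Rp b (Suc K) + 1" by simp
    ultimately show ?thesis unfolding vl_Suc by linarith
  qed
qed

lemma divmod_uniq: "(r::nat) < R \<Longrightarrow> (q * R + r) div R = q \<and> (q * R + r) mod R = r"
  by simp

lemma normal_uniq: "b \<ge> 1 \<Longrightarrow> normal b K t \<Longrightarrow> normal b K t' \<Longrightarrow> vl b K t = vl b K t' \<Longrightarrow>
   \<forall>i\<in>{1..K}. t i = t' i"
proof (induction K)
  case 0 then show ?case by simp
next
  case (Suc K)
  let ?R = "Rp b (Suc K)"
  have n1: "normal b K t" "normal b K t'" using Suc.prems normal_Suc by auto
  have b1: "vl b K t < ?R" "vl b K t' < ?R" using normal_bound n1 Suc.prems(1) by auto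
  have e1: "vl b (Suc K) t = t (Suc K) * ?R + vl b K t" using vl_Suc by simp
  have e2: "vl b (Suc K) t' = t' (Suc K) * ?R + vl b K t'" using vl_Suc by simp
  have d1: "t (Suc K) = vl b (Suc K) t div ?R" "vl b K t = vl b (Suc K) t mod ?R"
    using e1 divmod_uniq[OF b1(1)] by auto
  have d2: "t' (Suc K) = vl b (Suc K) t' div ?R" "vl b K t' = vl b (Suc K) t' mod ?R"
    using e2 divmod_uniq[OF b1(2)] by auto
  have "t (Suc K) = t' (Suc K)" using d1 d2 Suc.prems by simp
  moreover have "\<forall>i\<in>{1..K}. t i = t' i" using Suc.IH[OF Suc.prems(1) n1] d1 d2 Suc.prems by simp
  ultimately show ?case by (auto simp: le_Suc_eq)
qed

definition mval :: "nat \<Rightarrow> nat multiset \<Rightarrow> nat" where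
  "mval b M = sum_mset (image_mset (Rp b) M)"

definition normalM :: "nat \<Rightarrow> nat multiset \<Rightarrow> bool" where
  "normalM b M = (0 \<notin># M \<and> (\<forall>i. count M i \<le> b) \<and>
     (\<forall>i j. count M i = b \<longrightarrow> 1 \<le> j \<longrightarrow> j < i \<longrightarrow> count M j = 0))"

lemma mval_plus[simp]: "mval b (A + B) = mval b A + mval b B"
  unfolding mval_def by simp

lemma mval_rep[simp]: "mval b (replicate_mset k x) = k * Rp b x"
  unfolding mval_def by simp

lemma mval_empty[simp]: "mval b {#} = 0"
  unfolding mval_def by simp

lemma mval_add_mset[simp]: "mval b (add_mset x M) = Rp b x + mval b M"
  unfolding mval_def by simp

lemma mval_single[simp]: "mval b {#x#} = Rp b x"
  unfolding mval_def by simp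

lemma move_exists:
  assumes b: "b \<ge> 2" and nn: "\<not> normalM b M" and z: "0 \<notin># M"
  shows "\<exists>i j. 1 \<le> j \<and> j \<le> i \<and> replicate_mset b i + {#j#} \<subseteq># M"
proof (cases "\<exists>i. count M i > b")
  case True
  then obtain i where i: "count M i > b" by blast
  then have "i \<noteq> 0" using z b by (metis count_inI not_less0 gr_implies_not0)
  moreover have "replicate_mset b i + {#i#} \<subseteq># M"
    using i by (auto simp: subseteq_mset_def)
  ultimately show ?thesis by (intro exI[of _ i]) auto
next
  case False
  then obtain i j where ij: "count M i = b" "1 \<le> j" "j < i" "count M j \<noteq> 0"
    using nn z unfolding normalM_def by (auto simp: not_less)
  have "replicate_mset b i + {#j#} \<subseteq># M"
    using ij by (auto simp: subseteq_mset_def)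
  then show ?thesis using ij by (intro exI[of _ i] exI[of _ j]) auto
qed

lemma normalize:
  assumes b: "b \<ge> 2"
  shows "\<exists>N. normalM b N \<and> mval b N = mval b M \<and> size N \<le> size M"
proof (induction "size M + sum_mset M" arbitrary: M rule: less_induct)
  case less
  show ?case
  proof (cases "normalM b M")
    case True then show ?thesis by blast
  next
    case nn: False
    show ?thesis
    proof (cases "0 \<in># M")
      case True
      define M' where "M' = M - {#0#}"
      have M: "M = M' + {#0#}" using True unfolding M'_def by simp
      have "size M' + sum_mset M' < size M + sum_mset M" using M by simp
      from less[OF this] obtain N where "normalM b N" "mval b N = mval b M'" "size N \<le> size M'"
        by blast
      then show ?thesis using M by (intro exI[of _ N]) auto
    next
      case False
      obtain i j where ij: "1 \<le> j" "j \<le> i" and sub: "replicate_mset b i + {#j#} \<subseteq># M"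
        using move_exists[OF b nn False] by blast
      define C where "C = M - (replicate_mset b i + {#j#})"
      have M: "M = C + (replicate_mset b i + {#j#})" using sub unfolding C_def by (metis subset_mset.diff_add)
      define M' where "M' = C + ({#Suc i#} + replicate_mset b (j - 1))"
      have Rj: "Rp b j = b * Rp b (j - 1) + 1" using ij by (cases j) auto
      have vM: "mval b M' = mval b M" unfolding M M'_def using Rj by simp
      have sM: "size M' = size M" unfolding M M'_def by simp
      have "Suc i + b * (j - 1) < b * i + j"
      proof -
        obtain d where d: "i = j + d" using ij by (metis le_add_diff_inverse)
        obtain k where k: "j = Suc k" using ij by (cases j) auto
        have bd: "2 * d \<le> b * d" using b by simp
        show ?thesis unfolding d k using b by (simp add: algebra_simps) (use bd in linarith)
      qed
      then have "size M' + sum_mset M' < size M + sum_mset M" unfolding M M'_def by simp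
      from less[OF this] obtain N where "normalM b N" "mval b N = mval b M'" "size N \<le> size M'"
        by blast
      then show ?thesis using vM sM by (intro exI[of _ N]) auto
    qed
  qed
qed

lemma mset_sums:
  assumes "finite A" "set_mset M \<subseteq> A"
  shows "mval b M = (\<Sum>i\<in>A. count M i * Rp b i) \<and> size M = (\<Sum>i\<in>A. count M i)"
  using assms(2)
proof (induction M)
  case empty then show ?case by simp
next
  case (add x M)
  have x: "x \<in> A" using add.prems by simp
  have IH: "mval b M = (\<Sum>i\<in>A. count M i * Rp b i) \<and> size M = (\<Sum>i\<in>A. count M i)"
    using add by simp
  have e1: "(\<Sum>i\<in>A. count (add_mset x M) i * Rp b i) = (\<Sum>i\<in>A. count M i * Rp b i + (if i = x then Rp b x else 0))"
    by (intro sum.cong) auto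
  have e2: "(\<Sum>i\<in>A. count (add_mset x M) i) = (\<Sum>i\<in>A. count M i + (if i = x then 1 else 0))"
    by (intro sum.cong) auto
  show ?case using IH x assms(1) unfolding e1 e2 by (simp add: sum.distrib)
qed

lemma elem_le_mval: "x \<in># M \<Longrightarrow> Rp b x \<le> mval b M"
proof -
  assume "x \<in># M"
  then have "M = add_mset x (M - {#x#})" by simp
  then have "mval b M = Rp b x + mval b (M - {#x#})" by (metis mval_add_mset)
  then show ?thesis by simp
qed

lemma pow_lt_Rp: "b \<ge> 2 \<Longrightarrow> n \<ge> 1 \<Longrightarrow> b ^ n < Rp b (Suc n)"
proof -
  assume b: "b \<ge> 2" and n: "n \<ge> 1"
  have "(b - 1) * Rp b n + 1 = b ^ n" using Rp_pow b by simp
  moreover have "Rp b n \<ge> 1" using Rp_pos n by simp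
  moreover have "(b - 1) * Rp b n + Rp b n = b * Rp b n" using b by (cases b) (auto simp: algebra_simps)
  ultimately show ?thesis by simp
qed

lemma normalM_support:
  assumes b: "b \<ge> 2" and n: "n \<ge> 1" and N: "normalM b N" and v: "mval b N \<le> b ^ n"
  shows "set_mset N \<subseteq> {1..n}"
proof
  fix x assume x: "x \<in> set_mset N"
  have "x \<noteq> 0" using N x unfolding normalM_def by (cases "x = 0") auto
  moreover have "Rp b x < Rp b (Suc n)" using elem_le_mval[of x N b] x v pow_lt_Rp[OF b n] by linarith
  then have "x < Suc n" using Rp_mono[of b "Suc n" x] b by (meson not_less le_less_trans less_irrefl one_le_numeral order_trans)
  ultimately show "x \<in> {1..n}" by auto
qed

lemma normalM_normal: "normalM b N \<Longrightarrow> normal b K (count N)"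
  unfolding normalM_def normal_def by auto

lemma RC_normal: "t \<in> RC b n \<Longrightarrow> normal b n t"
  unfolding RC_def normal_def by blast

lemma vl_cong: "(\<And>i. i \<in> {1..K} \<Longrightarrow> t i = t' i) \<Longrightarrow> vl b K t = vl b K t'"
  unfolding vl_def by (intro sum.cong) auto

lemma ct_cong: "(\<And>i. i \<in> {1..K} \<Longrightarrow> t i = t' i) \<Longrightarrow> ct K t = ct K t'"
  unfolding ct_def by (intro sum.cong) auto

lemma vl_ge_term: "i \<in> {1..K} \<Longrightarrow> t i * Rp b i \<le> vl b K t"
  unfolding vl_def by (rule member_le_sum) auto

lemma RC_D:
  assumes "t \<in> RC b n"
  shows "\<And>i. i \<notin> {1..n} \<Longrightarrow> t i = 0" "t n \<le> b - 1"
    "t n = b - 1 \<Longrightarrow> t 1 \<le> 1" "\<And>i. t n = b - 1 \<Longrightarrow> i \<in> {1..n} \<Longrightarrow> i \<noteq> 1 \<Longrightarrow> i \<noteq> n \<Longrightarrow> t i = 0"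
  using assms unfolding RC_def mem_Collect_eq by blast+

lemma RC_bound:
  assumes b: "b \<ge> 2" and n: "n \<ge> 2" and t: "t \<in> RC b n"
  shows "vl b n t \<le> b ^ n"
proof -
  obtain n' where n': "n = Suc n'" using n by (cases n) auto
  have nt: "normal b n t" using RC_normal[OF t] .
  have lo: "vl b n' t < Rp b n" using normal_bound[of b n' t] normal_Suc[of b n' t] nt n' b by simp
  have tn: "t n \<le> b - 1" using RC_D[OF t] by blast
  have pw: "(b - 1) * Rp b n + 1 = b ^ n" using Rp_pow b by simp
  have e: "vl b n t = vl b n' t + t n * Rp b n" using vl_Suc n' by simp
  show ?thesis
  proof (cases "t n = b - 1")
    case True
    then have z: "t 1 \<le> 1" "\<And>i. i \<in> {1..n} \<Longrightarrow> i \<noteq> 1 \<Longrightarrow> i \<noteq> n \<Longrightarrow> t i = 0"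
 using RC_D(3,4)[OF t] True by blast+
    have "vl b n' t = vl b n' (\<lambda>i. if i = 1 then t 1 else 0)"
      using z(2) n' by (intro vl_cong) auto
    also have "\<dots> = (\<Sum>i=1..n'. if i = 1 then t 1 else 0)" unfolding vl_def
      by (intro sum.cong) auto
    also have "\<dots> = t 1" using n' n by (simp add: sum.delta)
    finally show ?thesis using e True pw z(1) by simp
  next
    case False
    then have "t n \<le> b - 2" using tn by simp
    then have "t n * Rp b n \<le> (b - 2) * Rp b n" by (rule mult_right_mono) simp
    moreover have "(b - 2) * Rp b n + Rp b n = (b - 1) * Rp b n" using b
      by (cases b; cases "b - 1") (auto simp: algebra_simps)
    ultimately show ?thesis using e lo pw by linarith
  qed
qed

lemma normal_cong: "(\<And>i. i \<in> {1..K} \<Longrightarrow> t i = t' i) \<Longrightarrow> normal b K t \<Longrightarrow> normal b K t'"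
  unfolding normal_def by (metis atLeastAtMost_iff less_imp_le_nat order_trans)

lemma mset_vl:
  assumes "set_mset N \<subseteq> {1..n}"
  shows "vl b n (count N) = mval b N" "ct n (count N) = size N"
  using mset_sums[of "{1..n}" N b] assms unfolding vl_def ct_def by auto

lemma RC_exists:
  assumes b: "b \<ge> 2" and n: "n \<ge> 2" and w: "w \<le> b ^ n"
  shows "\<exists>t\<in>RC b n. vl b n t = w"
proof -
  obtain N where N: "normalM b N" "mval b N = mval b (replicate_mset w 1)"
    using normalize[OF b] by blast
  have mN: "mval b N = w" using N(2) by simp
  have supp: "set_mset N \<subseteq> {1..n}" using normalM_support[OF b _ N(1)] mN w n by simp
  define t where "t i = (if i \<in> {1..n} then count N i else 0)" for i
  have tc: "\<And>i. i \<in> {1..n} \<Longrightarrow> count N i = t i" unfolding t_def by simp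
  have vt: "vl b n t = w" using vl_cong[OF tc] mset_vl(1)[OF supp] mN by simp
  have nt: "normal b n t" using normal_cong[OF tc normalM_normal[OF N(1)]] .
  obtain n' where n': "n = Suc n'" using n by (cases n) auto
  have nin: "n \<in> {1..n}" using n by simp
  have pw: "(b - 1) * Rp b n + 1 = b ^ n" using Rp_pow b by simp
  have R3: "Rp b n \<ge> b + 1" using Rp_ge2 b n by simp
  have tnR: "t n * Rp b n \<le> w" using vl_ge_term[OF nin, of t b] vt by simp
  have tn: "t n \<le> b - 1"
  proof (rule ccontr)
    assume "\<not> t n \<le> b - 1"
    then have "b \<le> t n" by simp
    then have "b * Rp b n \<le> t n * Rp b n" by (rule mult_right_mono) simp
    moreover have "(b - 1) * Rp b n + Rp b n = b * Rp b n" using b by (cases b) (auto simp: algebra_simps)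
    ultimately show False using tnR w pw R3 b by linarith
  qed
  have top: "t 1 \<le> 1 \<and> (\<forall>i\<in>{1..n}. i \<noteq> 1 \<and> i \<noteq> n \<longrightarrow> t i = 0)" if tb: "t n = b - 1"
  proof -
    have "vl b n t = vl b n' t + (b - 1) * Rp b n" using vl_Suc[of b n' t] n' tb by simp
    then have lo: "vl b n' t \<le> 1" using vt w pw by linarith
    have "t 1 * Rp b 1 \<le> 1" using vl_ge_term[of 1 n' t b] lo n' n by simp
    then have "t 1 \<le> 1" by simp
    moreover have "t i = 0" if i: "i \<in> {1..n}" "i \<noteq> 1" "i \<noteq> n" for i
    proof -
      have "i \<in> {1..n'}" "i \<ge> 2" using i n' by auto
      then have "t i * Rp b i \<le> 1" "Rp b i \<ge> b + 1" using vl_ge_term[of i n' t b] lo Rp_ge2[of b i] b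
        by auto
      then show ?thesis using b by (cases "t i") auto
    qed
    ultimately show ?thesis by blast
  qed
  have "t \<in> RC b n"
    unfolding RC_def mem_Collect_eq
  proof (intro conjI)
    show "\<forall>i. i \<notin> {1..n} \<longrightarrow> t i = 0" unfolding t_def by simp
    show "\<forall>i\<in>{1..n}. t i \<le> b" using nt unfolding normal_def by blast
    show "\<forall>i\<in>{1..n}. t i = b \<longrightarrow> (\<forall>j. 1 \<le> j \<and> j < i \<longrightarrow> t j = 0)"
      using nt unfolding normal_def by blast
    show "t n \<le> b - 1" using tn .
    show "t n = b - 1 \<longrightarrow> t 1 \<le> 1 \<and> (\<forall>i\<in>{1..n}. i \<noteq> 1 \<and> i \<noteq> n \<longrightarrow> t i = 0)"
      using top by blast
  qed
  then show ?thesis using vt by blast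
qed

lemma RC_min:
  assumes b: "b \<ge> 2" and n: "n \<ge> 2" and t: "t \<in> RC b n" and J: "mval b J = vl b n t"
  shows "ct n t \<le> size J"
proof -
  obtain N where N: "normalM b N" "mval b N = mval b J" "size N \<le> size J"
    using normalize[OF b] by blast
  have supp: "set_mset N \<subseteq> {1..n}"
    using normalM_support[OF b _ N(1)] N(2) J RC_bound[OF b n t] n by simp
  have "\<forall>i\<in>{1..n}. count N i = t i"
    using normal_uniq[of b n "count N" t] normalM_normal[OF N(1)] RC_normal[OF t] b
      mset_vl(1)[OF supp] N(2) J by simp
  then have "ct n t = ct n (count N)" by (intro ct_cong) auto
  then show ?thesis using mset_vl(2)[OF supp] N(3) by simp
qed

lemma mg_add: "x \<in> monoid_gen A \<Longrightarrow> y \<in> monoid_gen A \<Longrightarrow> x + y \<in> monoid_gen A"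
  by (induction x rule: monoid_gen.induct) (auto simp: add.assoc intro: monoid_gen.add)

lemma mg_gen: "a \<in> A \<Longrightarrow> a \<in> monoid_gen A"
  using monoid_gen.add[OF _ monoid_gen.zero] by simp

lemma mg_mult: "a \<in> monoid_gen A \<Longrightarrow> k * a \<in> monoid_gen A"
  by (induction k) (auto intro: mg_add monoid_gen.zero)

lemma mg_sum: "finite F \<Longrightarrow> (\<And>i. i \<in> F \<Longrightarrow> f i \<in> monoid_gen A) \<Longrightarrow> sum f F \<in> monoid_gen A"
  by (induction F rule: finite_induct) (auto intro: mg_add monoid_gen.zero)

lemma mg_rep: "s \<in> monoid_gen {b ^ (n + i) + 1 | i. True} \<Longrightarrow>
  \<exists>J. s = sum_mset (image_mset (\<lambda>j. b ^ (n + j) + 1) J)"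
proof (induction s rule: monoid_gen.induct)
  case zero then show ?case by (intro exI[of _ "{#}"]) simp
next
  case (add a s)
  then obtain i J where "a = b ^ (n + i) + 1" "s = sum_mset (image_mset (\<lambda>j. b ^ (n + j) + 1) J)"
    by blast
  then show ?case by (intro exI[of _ "add_mset i J"]) simp
qed

lemma cR: "b \<ge> 1 \<Longrightarrow> b ^ (n + j) + 1 = b ^ n * (b - 1) * Rp b j + (b ^ n + 1)"
proof -
  assume b: "b \<ge> 1"
  have "b ^ n * (b - 1) * Rp b j + (b ^ n + 1) = b ^ n * ((b - 1) * Rp b j + 1) + 1"
    by (simp add: algebra_simps)
  also have "\<dots> = b ^ (n + j) + 1" using Rp_pow[OF b, of j] by (simp add: power_add)
  finally show ?thesis by simp
qed

lemma sum_rep0: "(\<And>j. f j = K * Rp b j + m) \<Longrightarrow> sum_mset (image_mset f J)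
   = K * mval b J + m * size J"
proof (induction J)
  case empty then show ?case by simp
next
  case (add x J)
  then show ?case by (simp add: algebra_simps)
qed

lemma sum_rep: "b \<ge> 1 \<Longrightarrow> sum_mset (image_mset (\<lambda>j. b ^ (n + j) + 1) J)
   = b ^ n * (b - 1) * mval b J + (b ^ n + 1) * size J"
  by (rule sum_rep0) (rule cR)

lemma r_formula: "b \<ge> 1 \<Longrightarrow> (\<Sum>i=1..n. t i * (b ^ (n + i) + 1))
   = b ^ n * (b - 1) * vl b n t + (b ^ n + 1) * ct n t"
proof -
  assume b: "b \<ge> 1"
  have "(\<Sum>i=1..n. t i * (b ^ (n + i) + 1)) = (\<Sum>i=1..n. b ^ n * (b - 1) * (t i * Rp b i) + (b ^ n + 1) * t i)"
    using cR[OF b, of n] by (intro sum.cong) (auto simp: algebra_simps)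
  also have "\<dots> = b ^ n * (b - 1) * vl b n t + (b ^ n + 1) * ct n t"
    unfolding vl_def ct_def by (simp add: sum.distrib sum_distrib_left)
  finally show ?thesis .
qed

lemma ct_le_vl: "ct n t \<le> vl b n t"
  unfolding ct_def vl_def
proof (rule sum_mono)
  fix i assume "i \<in> {1..n}"
  then have "Rp b i \<ge> 1" using Rp_pos by simp
  then show "t i \<le> t i * Rp b i" by simp
qed

lemma reduce:
  assumes b: "b \<ge> 2" and n: "n \<ge> 2" and s: "s \<in> SCplus b n"
  shows "\<exists>t\<in>RC b n. \<exists>D. s = (\<Sum>i=1..n. t i * (b ^ (n + i) + 1)) + (b ^ n + 1) * D"
proof -
  let ?m = "b ^ n + 1"
  obtain J where J: "s = sum_mset (image_mset (\<lambda>j. b ^ (n + j) + 1) J)"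
    using mg_rep s unfolding SCplus_def by blast
  let ?W = "mval b J"
  define w where "w = ?W mod ?m"
  define k where "k = ?W div ?m"
  have W: "?W = w + ?m * k" unfolding w_def k_def by (metis add.commute div_mult_mod_eq mult.commute)
  have "w < ?m" unfolding w_def by simp
  then have wle: "w \<le> b ^ n" by simp
  obtain t where t: "t \<in> RC b n" "vl b n t = w" using RC_exists[OF b n wle] by blast
  have Tle: "ct n t \<le> b ^ n * (b - 1) * k + size J"
  proof (cases "k = 0")
    case True
    then have mv: "mval b J = vl b n t" using W t by simp
    show ?thesis using RC_min[OF b n t(1) mv] True by simp
  next
    case False
    have "ct n t \<le> b ^ n" using ct_le_vl[of n t b] t(2) wle by simp
    also have "b ^ n \<le> b ^ n * (b - 1) * k" using False b by simp
    finally show ?thesis by simp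
  qed
  define K where "K = b ^ n * (b - 1)"
  have Tle': "ct n t \<le> K * k + size J" using Tle unfolding K_def .
  obtain D where D: "K * k + size J = ct n t + D" using le_Suc_ex[OF Tle'] by blast
  have "s = K * ?W + ?m * size J" using J sum_rep[of b n J] b unfolding K_def by simp
  also have "\<dots> = K * w + ?m * (K * k + size J)"
    unfolding W by (simp add: algebra_simps)
  also have "\<dots> = K * vl b n t + ?m * ct n t + ?m * D"
    using t(2) unfolding D by (simp add: algebra_simps)
  also have "\<dots> = (\<Sum>i=1..n. t i * (b ^ (n + i) + 1)) + ?m * D"
    using r_formula[where b=b and n=n and t=t] b unfolding K_def by simp
  finally show ?thesis using t(1) by blast
qed

lemma coprime_m: fixes b n :: nat assumes "even b" "b \<ge> 2" shows "coprime (b ^ n + 1) (b - 1)"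
proof -
  let ?g = "gcd (b ^ n + 1) (b - 1)"
  have e: "b ^ n + 1 = (b - 1) * Rp b n + 2"
  proof -
    have "(b - 1) * Rp b n + 1 = b ^ n" using Rp_pow[of b n] assms(2) by linarith
    then show ?thesis by linarith
  qed
  have g1: "?g dvd (b - 1) * Rp b n + 2" using gcd_dvd1[of "b ^ n + 1" "b - 1"] unfolding e .
  have g2: "?g dvd (b - 1) * Rp b n" using dvd_mult2[OF gcd_dvd2[of "b ^ n + 1" "b - 1"]] .
  have g3: "?g dvd 2" using dvd_add_right_iff[OF g2, of 2] g1 by simp
  have ob: "odd (b - 1)" using assms by presburger
  have og: "odd ?g"
  proof
    assume "even ?g"
    then have "2 dvd (b - 1)" using gcd_dvd2[of "b ^ n + 1" "b - 1"] by (rule dvd_trans)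
    then show False using ob by simp
  qed
  have "?g = 1" using odd_dvd2[OF g3 og] .
  then show ?thesis by (rule gcd_eq_1_imp_coprime)
qed




lemma inj_res:
  assumes eb: "even b" and b: "b \<ge> 2" and n: "n \<ge> 2" and t: "t \<in> RC b n" and t': "t' \<in> RC b n"
    and eq: "(\<Sum>i=1..n. t i * (b ^ (n + i) + 1)) = (\<Sum>i=1..n. t' i * (b ^ (n + i) + 1)) + (b ^ n + 1) * D"
  shows "D = 0"
proof -
  let ?m = "b ^ n + 1"
  let ?v = "vl b n t" and ?v' = "vl b n t'" and ?T = "ct n t" and ?T' = "ct n t'"
  have E: "b ^ n * (b - 1) * ?v + ?m * ?T = b ^ n * (b - 1) * ?v' + ?m * ?T' + ?m * D"
    using eq r_formula[where b=b and n=n and t=t] r_formula[where b=b and n=n and t=t'] b by simp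
  define x where "x = int (b - 1) * (int ?v - int ?v')"
  have Ei: "int (b ^ n) * x = int ?m * (int ?T' + int D - int ?T)"
    using arg_cong[OF E, of int] unfolding x_def by (simp only: of_nat_add of_nat_mult) (simp add: algebra_simps)
  have "int (b ^ n) = int ?m - 1" by simp
  then have "x = int ?m * (x - (int ?T' + int D - int ?T))" using Ei by (simp add: algebra_simps)
  then have "int ?m dvd x" by (rule dvdI)
  moreover have "coprime (int ?m) (int (b - 1))" using coprime_int_iff[of "b ^ n + 1" "b - 1", THEN iffD2, OF coprime_m[OF eb b]] .
  ultimately have dv: "int ?m dvd (int ?v - int ?v')" unfolding x_def
    using coprime_dvd_mult_right_iff by blast
  have "?v \<le> b ^ n" "?v' \<le> b ^ n" using RC_bound b n t t' by auto
  then have "?v < ?m" "?v' < ?m" by simp_all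
  then have "int ?v < int ?m" "int ?v' < int ?m" by (simp_all only: of_nat_less_iff)
  then have "\<bar>int ?v - int ?v'\<bar> < \<bar>int ?m\<bar>" unfolding abs_less_iff by simp
  then have "int ?v - int ?v' = 0" using dv dvd_imp_le_int by (metis not_le)
  then have vv: "?v = ?v'" by simp
  have "\<forall>i\<in>{1..n}. t i = t' i" using normal_uniq[of b n t t'] RC_normal t t' vv b by simp
  then have "?T = ?T'" by (intro ct_cong) auto
  then show ?thesis using E vv by simp
qed

theorem mainTheorem16:
  fixes b n :: nat
  assumes "even b" and "b \<ge> 2" and "n \<ge> 2"
  shows "Apery (SCplus b n) (b ^ n + 1) =
         {(\<Sum>i=1..n. t i * (b ^ (n + i) + 1)) | t. t \<in> RC b n}"
proof -
  let ?m = "b ^ n + 1"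
  let ?S = "SCplus b n"
  have Sadd: "x \<in> ?S \<Longrightarrow> y \<in> ?S \<Longrightarrow> x + y \<in> ?S" for x y
    unfolding SCplus_def by (rule mg_add)
  have cS: "b ^ (n + i) + 1 \<in> ?S" for i unfolding SCplus_def by (rule mg_gen) blast
  have mS: "?m \<in> ?S" using cS[of 0] by simp
  have mD: "?m * D \<in> ?S" for D using mg_mult[of ?m _ D] mS unfolding SCplus_def by (simp add: mult.commute)
  have tc: "t i * (b ^ (n + i) + 1) \<in> ?S" for t i
    using mg_mult[OF cS[of i, unfolded SCplus_def], of "t i"] unfolding SCplus_def .
  have rS: "(\<Sum>i=1..n. t i * (b ^ (n + i) + 1)) \<in> ?S" for t
    using tc unfolding SCplus_def by (intro mg_sum) auto
  show ?thesis
  proof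
    show "Apery ?S ?m \<subseteq> {(\<Sum>i=1..n. t i * (b ^ (n + i) + 1)) | t. t \<in> RC b n}"
    proof
      fix s assume "s \<in> Apery ?S ?m"
      then have s: "s \<in> ?S" "\<not> (?m \<le> s \<and> s - ?m \<in> ?S)" unfolding Apery_def by auto
      obtain t D where t: "t \<in> RC b n" "s = (\<Sum>i=1..n. t i * (b ^ (n + i) + 1)) + ?m * D"
        using reduce[OF assms(2,3) s(1)] by blast
      have "D = 0"
      proof (rule ccontr)
        assume "D \<noteq> 0"
        then obtain D' where D': "D = Suc D'" by (cases D) auto
        have "s - ?m = (\<Sum>i=1..n. t i * (b ^ (n + i) + 1)) + ?m * D'" "?m \<le> s"
          using t(2) D' by auto
        then show False using s(2) Sadd[OF rS mD] by metis
      qed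
      then show "s \<in> {(\<Sum>i=1..n. t i * (b ^ (n + i) + 1)) | t. t \<in> RC b n}" using t by auto
    qed
  next
    show "{(\<Sum>i=1..n. t i * (b ^ (n + i) + 1)) | t. t \<in> RC b n} \<subseteq> Apery ?S ?m"
    proof
      fix s assume "s \<in> {(\<Sum>i=1..n. t i * (b ^ (n + i) + 1)) | t. t \<in> RC b n}"
      then obtain t where t: "t \<in> RC b n" "s = (\<Sum>i=1..n. t i * (b ^ (n + i) + 1))" by blast
      have "\<not> (?m \<le> s \<and> s - ?m \<in> ?S)"
      proof
        assume h: "?m \<le> s \<and> s - ?m \<in> ?S"
        obtain t' D where t': "t' \<in> RC b n" "s - ?m = (\<Sum>i=1..n. t' i * (b ^ (n + i) + 1)) + ?m * D"
          using reduce[OF assms(2,3)] h by blast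
        define X where "X = (\<Sum>i=1..n. t' i * (b ^ (n + i) + 1))"
        define M where "M = ?m"
        have e1: "s - M = X + M * D" "M \<le> s" using t'(2) h unfolding X_def M_def by auto
        then have "s = X + M * Suc D" by simp
        then have "(\<Sum>i=1..n. t i * (b ^ (n + i) + 1)) = (\<Sum>i=1..n. t' i * (b ^ (n + i) + 1)) + ?m * Suc D"
          using t(2) unfolding X_def M_def by simp
        then have "Suc D = 0" by (rule inj_res[OF assms t(1) t'(1)])
        then show False by simp
      qed
      then show "s \<in> Apery ?S ?m" unfolding Apery_def using rS t(2) by simp
    qed
  qed
qed

end
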